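(* For $a,b\in\mathbb{C}\setminus\{0\}$ let $$f_{a,b}(z)=\frac{z^3+az^2+b}{-\overline{b}z^3-\overline{a}z+1}.$$ If $c,d\in\mathbb{R}\setminus\{0\}$, then $f_{c,di}$ is conjugate, via a conformal map of $\mathbb{C}_\infty$ that is either orientation preserving or orientation reversing, to a map $f_{a,bi}$ of the same form with $a,b\in\mathbb{R}$, $a\ge0$ and $b\ge0$. *)

theory Defs
  imports "HOL-Analysis.Analysis"
begin

text \<open>The rational map f_{a,b}(z) = (z^3 + a z^2 + b) / (- conj b z^3 - conj a z + 1),
  written as a function on the finite plane (values at poles are irrelevant, see below).\<close>
definition fab :: "complex \<Rightarrow> complex \<Rightarrow> complex \<Rightarrow> complex" where
  "fab a b z = (z^3 + a * z^2 + b) / (- cnj b * z^3 - cnj a * z + 1)"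

text \<open>Conformal automorphisms of the Riemann sphere: orientation preserving ones are
  Moebius transformations, orientation reversing ones are Moebius transformations
  composed with complex conjugation.\<close>
definition sphere_conformal :: "(complex \<Rightarrow> complex) \<Rightarrow> bool" where
  "sphere_conformal \<phi> \<longleftrightarrow>
     (\<exists>\<alpha> \<beta> \<gamma> \<delta>. \<alpha> * \<delta> - \<beta> * \<gamma> \<noteq> 0 \<and>
        (\<phi> = moebius \<alpha> \<beta> \<gamma> \<delta> \<or> \<phi> = (\<lambda>z. moebius \<alpha> \<beta> \<gamma> \<delta> (cnj z))))"

text \<open>Conjugacy of two (anti)rational maps on the sphere, expressed as
  equality of phi o f and g o phi away from a finite set of points (equivalent,
  for rational maps, to equality as maps of the Riemann sphere).\<close>
definition conj_via :: "(complex \<Rightarrow> complex) \<Rightarrow> (complex \<Rightarrow> complex) \<Rightarrow> (complex \<Rightarrow> complex) \<Rightarrow> bool" where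
  "conj_via \<phi> f g \<longleftrightarrow> (\<exists>S. finite S \<and> (\<forall>z. z \<notin> S \<longrightarrow> \<phi> (f z) = g (\<phi> z)))"

end

theory Submission
  imports Defs
begin

lemma L1: "fab (complex_of_real c) (complex_of_real d * \<i>) z = fab (complex_of_real c) (complex_of_real d * \<i>) z"
  by simp

lemma Lneg: "- fab (complex_of_real c) (complex_of_real d * \<i>) z
   = fab (complex_of_real (-c)) (complex_of_real (-d) * \<i>) (- z)"
proof -
  let ?N = "z^3 + complex_of_real c * z^2 + complex_of_real d * \<i>"
  let ?D = "- cnj (complex_of_real d * \<i>) * z^3 - cnj (complex_of_real c) * z + 1"
  have N: "- ?N = (-z)^3 + complex_of_real (-c) * (-z)^2 + complex_of_real (-d) * \<i>"
    by (simp add: power3_eq_cube power2_eq_square)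
  have D: "?D = - cnj (complex_of_real (-d) * \<i>) * (-z)^3 - cnj (complex_of_real (-c)) * (-z) + 1"
    by (simp add: power3_eq_cube)
  have "- fab (complex_of_real c) (complex_of_real d * \<i>) z = (- ?N) / ?D"
    unfolding fab_def by (simp add: minus_divide_left)
  also have "\<dots> = fab (complex_of_real (-c)) (complex_of_real (-d) * \<i>) (- z)"
    unfolding fab_def by (subst N, subst D) (rule refl)
  finally show ?thesis .
qed

lemma Lcnj: "cnj (fab (complex_of_real c) (complex_of_real d * \<i>) z)
   = fab (complex_of_real c) (complex_of_real (-d) * \<i>) (cnj z)"
  unfolding fab_def by (simp add: algebra_simps power3_eq_cube power2_eq_square)

lemma Lnegcnj: "- cnj (fab (complex_of_real c) (complex_of_real d * \<i>) z)
   = fab (complex_of_real (-c)) (complex_of_real d * \<i>) (- cnj z)"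
  using Lneg[of c "-d" "cnj z"] Lcnj[of c d z] by simp

theorem mainTheorem7:
  fixes c d :: real
  assumes "c \<noteq> 0" and "d \<noteq> 0"
  shows "\<exists>a b :: real. a \<ge> 0 \<and> b \<ge> 0 \<and> a \<noteq> 0 \<and> b \<noteq> 0 \<and>
           (\<exists>\<phi>. sphere_conformal \<phi> \<and>
                 conj_via \<phi> (fab (complex_of_real c) (complex_of_real d * \<i>))
                            (fab (complex_of_real a) (complex_of_real b * \<i>)))"
proof -
  have m1: "moebius 1 0 0 1 = (\<lambda>z. z)" by (auto simp: moebius_def)
  have m2: "moebius (-1) 0 0 1 = (\<lambda>z. -z)" by (auto simp: moebius_def)
  have s1: "sphere_conformal (\<lambda>z. z)" unfolding sphere_conformal_def
    by (rule exI[of _ 1], rule exI[of _ 0], rule exI[of _ 0], rule exI[of _ 1]) (simp add: m1)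
  have s2: "sphere_conformal (\<lambda>z. -z)" unfolding sphere_conformal_def
    by (rule exI[of _ "-1"], rule exI[of _ 0], rule exI[of _ 0], rule exI[of _ 1]) (simp add: m2)
  have s3: "sphere_conformal (\<lambda>z. cnj z)" unfolding sphere_conformal_def
    by (rule exI[of _ 1], rule exI[of _ 0], rule exI[of _ 0], rule exI[of _ 1]) (simp add: m1)
  have s4: "sphere_conformal (\<lambda>z. - cnj z)" unfolding sphere_conformal_def
    by (rule exI[of _ "-1"], rule exI[of _ 0], rule exI[of _ 0], rule exI[of _ 1]) (simp add: m2)
  consider "c > 0" "d > 0" | "c < 0" "d < 0" | "c > 0" "d < 0" | "c < 0" "d > 0"
    using assms by linarith
  then show ?thesis
  proof cases
    case 1
    then show ?thesis using s1 unfolding conj_via_def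
      by (intro exI[of _ c] exI[of _ d]) auto
  next
    case 2
    then show ?thesis using s2 Lneg[of c d] unfolding conj_via_def
      by (intro exI[of _ "-c"] exI[of _ "-d"]) auto
  next
    case 3
    then show ?thesis using s3 Lcnj[of c d] unfolding conj_via_def
      by (intro exI[of _ c] exI[of _ "-d"]) auto
  next
    case 4
    then show ?thesis using s4 Lnegcnj[of c d] unfolding conj_via_def
      by (intro exI[of _ "-c"] exI[of _ d]) auto
  qed
qed

end
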